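(* Let $m$ be an integer with $m \equiv 1 \pmod 4$ and $m \ge 5$, and let $n = 3^m - 1$. Then: (i) the ternary cyclic code $\mathcal{C}_{(0,3,m)}$ has length $n$ and dimension $(n+2)/2$, and the ternary cyclic code $\mathcal{C}_{(1,2,m)}$ has length $n$ and dimension $n/2$; (ii) the ternary cyclic code $\mathcal{C}_{(2,3,m)}$ has length $n$ and dimension $(n+2)/2$, and the ternary cyclic code $\mathcal{C}_{(0,1,m)}$ has length $n$ and dimension $n/2$.
   Context: Let $m \ge 2$ be an integer, $n = 3^m-1$, and let $\alpha$ be a primitive element of $\mathbb{F}_{3^m}$. For an integer $0 \le j \le n-1$ with $3$-adic expansion $j = \sum_{t=0}^{m-1} j_t 3^t$, $j_t \in \{0,1,2\}$, let $w_3(j) = \sum_{t=0}^{m-1} j_t$. For distinct $i_1, i_2 \in \{0,1,2,3\}$ let $T_{(i_1,i_2,m)} = \{1 \le j \le n-1 : w_3(j) \equiv i_1 \text{ or } i_2 \pmod 4\}$ and $g_{(i_1,i_2,m)}(x) = \prod_{j \in T_{(i_1,i_2,m)}} (x - \alpha^j) \in \mathbb{F}_3[x]$. $\mathcal{C}_{(i_1,i_2,m)}$ denotes the ternary cyclic code of length $n$ with generator polynomial $g_{(i_1,i_2,m)}(x)$, i.e. the ideal generated by $g_{(i_1,i_2,m)}(x)$ in $\mathbb{F}_3[x]/(x^n-1)$. *)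

theory Defs
  imports Main "HOL-Computational_Algebra.Polynomial"
begin

definition w3 :: "nat \<Rightarrow> nat \<Rightarrow> nat" where
  "w3 m j = (\<Sum>t<m. (j div 3 ^ t) mod 3)"

definition T_set :: "nat \<Rightarrow> nat \<Rightarrow> nat \<Rightarrow> nat set" where
  "T_set i1 i2 m = {j. 1 \<le> j \<and> j \<le> 3 ^ m - 2 \<and> (w3 m j mod 4 = i1 \<or> w3 m j mod 4 = i2)}"

definition primitive_elem :: "'a::field \<Rightarrow> bool" where
  "primitive_elem \<alpha> \<longleftrightarrow> \<alpha> \<noteq> 0 \<and> (\<forall>x. x \<noteq> 0 \<longrightarrow> (\<exists>k::nat. x = \<alpha> ^ k))"

definition ring_hom_fun :: "('f::field \<Rightarrow> 'a::field) \<Rightarrow> bool" where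
  "ring_hom_fun \<phi> \<longleftrightarrow> \<phi> 1 = 1 \<and> (\<forall>x y. \<phi> (x + y) = \<phi> x + \<phi> y \<and> \<phi> (x * y) = \<phi> x * \<phi> y)"

definition gen_poly_ext :: "'a::field \<Rightarrow> nat \<Rightarrow> nat \<Rightarrow> nat \<Rightarrow> 'a poly" where
  "gen_poly_ext \<alpha> i1 i2 m = (\<Prod>j\<in>T_set i1 i2 m. [:- (\<alpha> ^ j), 1:])"

text \<open>The generator polynomial as an element of F_3[x] (its coefficients lie in F_3,
  identified with a subfield of F_{3^m} via the embedding phi).\<close>
definition gen_poly :: "('f::field \<Rightarrow> 'a::field) \<Rightarrow> 'a \<Rightarrow> nat \<Rightarrow> nat \<Rightarrow> nat \<Rightarrow> 'f poly" where
  "gen_poly \<phi> \<alpha> i1 i2 m = (THE g. map_poly \<phi> g = gen_poly_ext \<alpha> i1 i2 m)"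

text \<open>Cyclic code of length n generated by g: the ideal (g) in F[x]/(x^n - 1),
  with residues represented by polynomials of degree < n.\<close>
definition cyclic_code :: "nat \<Rightarrow> 'f::field poly \<Rightarrow> 'f poly set" where
  "cyclic_code n g = {(g * h) mod (monom 1 n - 1) | h. True}"

definition code_dim :: "'f::field poly set \<Rightarrow> nat" where
  "code_dim C = vector_space.dim (smult :: 'f \<Rightarrow> 'f poly \<Rightarrow> 'f poly) C"

end

theory Submission
  imports Defs
begin


lemma hom_sum:
  assumes h0: "h 0 = 0" and hadd: "\<And>x y. h (x + y) = h x + h y"
  shows "h (sum f S) = (\<Sum>x\<in>S. h (f x))"
proof (induction S rule: infinite_finite_induct)
  case (insert x F) then show ?case by (simp add: hadd)
qed (simp_all add: h0)

lemma map_poly_add_hom: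
  fixes h :: "'a::comm_ring_1 \<Rightarrow> 'b::comm_ring_1"
  assumes h0: "h 0 = 0" and hadd: "\<And>x y. h (x + y) = h x + h y"
  shows "map_poly h (p + q) = map_poly h p + map_poly h q"
  by (simp add: poly_eq_iff coeff_map_poly h0 hadd)

lemma map_poly_mult_hom:
  fixes h :: "'a::comm_ring_1 \<Rightarrow> 'b::comm_ring_1"
  assumes h0: "h 0 = 0" and hadd: "\<And>x y. h (x + y) = h x + h y"
    and hmul: "\<And>x y. h (x * y) = h x * h y"
  shows "map_poly h (p * q) = map_poly h p * map_poly h q"
  by (simp add: poly_eq_iff coeff_map_poly h0 coeff_mult hom_sum[OF h0 hadd] hmul)

lemma map_poly_prod_hom:
  fixes h :: "'a::comm_ring_1 \<Rightarrow> 'b::comm_ring_1"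
  assumes h0: "h 0 = 0" and h1: "h 1 = 1" and hadd: "\<And>x y. h (x + y) = h x + h y"
    and hmul: "\<And>x y. h (x * y) = h x * h y"
  shows "map_poly h (prod f S) = (\<Prod>x\<in>S. map_poly h (f x))"
proof (induction S rule: infinite_finite_induct)
  case (insert x F) then show ?case by (simp add: map_poly_mult_hom[OF h0 hadd hmul])
qed (simp_all add: h1)



interpretation pv: vector_space "smult :: 'a::field \<Rightarrow> 'a poly \<Rightarrow> 'a poly"
  by unfold_locales (simp_all add: smult_add_right smult_add_left)

lemma degree_X_n:
  assumes "n > 0"
  shows "degree (monom (1::'a::field) n - 1) = n"
proof -
  have "degree (monom (1::'a) n + (- 1)) = degree (monom (1::'a) n)"
    using assms by (intro degree_add_eq_left) (simp add: degree_monom_eq)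
  then show ?thesis by (simp add: degree_monom_eq)
qed

lemma code_dim_lemma:
  fixes g :: "'a::field poly"
  assumes n: "n > 0" and g0: "g \<noteq> 0" and gd: "g dvd (monom 1 n - 1)"
  shows "(\<forall>c\<in>cyclic_code n g. degree c < n) \<and> code_dim (cyclic_code n g) = n - degree g"
proof -
  define X :: "'a poly" where "X = monom 1 n - 1"
  have dX: "degree X = n" using degree_X_n[OF n] X_def by simp
  have X0: "X \<noteq> 0" using dX n by auto
  define C where "C = cyclic_code n g"
  have degC: "\<forall>c\<in>C. degree c < n"
  proof
    fix c assume "c \<in> C"
    then obtain h where c: "c = (g*h) mod X" unfolding C_def cyclic_code_def X_def by auto
    show "degree c < n"
      using degree_mod_less[OF X0, of "g*h"] c dX n by auto
  qed
  have dg: "degree g \<le> n"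
    using gd X0 dX X_def by (metis dvd_imp_degree_le)
  define d where "d = n - degree g"
  define e where "e = (\<lambda>k. g * monom 1 k)"
  define B where "B = e ` {..<d}"
  have dege: "degree (e k) = degree g + k" for k
    unfolding e_def using g0 by (simp add: degree_mult_eq degree_monom_eq)
  have inj: "inj_on e {..<d}"
  proof (rule inj_onI)
    fix x y assume "e x = e y"
    then have "degree (e x) = degree (e y)" by simp
    then show "x = y" using dege by simp
  qed
  have BC: "B \<subseteq> C"
  proof
    fix b assume "b \<in> B"
    then obtain k where k: "k < d" "b = e k" unfolding B_def by auto
    have "degree b < degree X" using k dege dX d_def by simp
    then have "b = (g * monom 1 k) mod X" using k(2) mod_poly_less e_def by metis
    then show "b \<in> C" unfolding C_def cyclic_code_def X_def by auto
  qed
  have CB: "C \<subseteq> pv.span B"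
  proof
    fix c assume cC: "c \<in> C"
    then obtain h where c: "c = (g*h) mod X" unfolding C_def cyclic_code_def X_def by auto
    have "g dvd c" unfolding c using gd X_def by (intro dvd_mod) auto
    then obtain h' where h': "c = g * h'" by (auto elim: dvdE)
    show "c \<in> pv.span B"
    proof (cases "h' = 0")
      case True then show ?thesis using h' pv.span_zero by simp
    next
      case False
      have "degree c < n" using degC cC by auto
      then have dh: "degree h' < d" using h' False g0 d_def by (simp add: degree_mult_eq)
      have hs: "h' = (\<Sum>k<d. monom (coeff h' k) k)"
      proof (rule poly_eqI)
        fix i
        show "coeff h' i = coeff (\<Sum>k<d. monom (coeff h' k) k) i"
          using dh by (auto simp: coeff_sum coeff_monom coeff_eq_0)
      qed
      have "c = (\<Sum>k<d. smult (coeff h' k) (e k))"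
        unfolding h' e_def by (subst hs) (simp add: sum_distrib_left smult_monom mult_smult_right[symmetric] del: mult_smult_right)
      also have "\<dots> \<in> pv.span B"
        by (intro pv.span_sum pv.span_scale pv.span_base) (auto simp: B_def)
      finally show ?thesis .
    qed
  qed
  have ind: "pv.independent B"
  proof (rule pv.independent_if_scalars_zero)
    show "finite B" unfolding B_def by simp
  next
    fix f x assume s: "(\<Sum>x\<in>B. smult (f x) x) = 0" and x: "x \<in> B"
    then obtain k where k: "k < d" "x = e k" unfolding B_def by auto
    have "(\<Sum>x\<in>B. smult (f x) x) = (\<Sum>j<d. smult (f (e j)) (e j))"
      unfolding B_def by (rule sum.reindex[OF inj, unfolded comp_def])
    also have "\<dots> = g * (\<Sum>j<d. monom (f (e j)) j)"
      unfolding e_def sum_distrib_left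
      by (intro sum.cong refl) (metis mult_smult_right smult_monom mult.right_neutral)
    finally have "(\<Sum>j<d. monom (f (e j)) j) = 0" using s g0 by simp
    then have "coeff (\<Sum>j<d. monom (f (e j)) j) k = 0" by simp
    then show "f x = 0" using k by (simp add: coeff_sum coeff_monom)
  qed
  have "card B = d" unfolding B_def using card_image[OF inj] by simp
  then have "code_dim C = d"
    unfolding code_dim_def using pv.basis_card_eq_dim[OF BC CB ind] by simp
  then show ?thesis using degC C_def d_def by simp
qed



lemma w3_Suc: "w3 (Suc m) j = j mod 3 + w3 m (j div 3)"
  unfolding w3_def sum.lessThan_Suc_shift
  by (simp add: div_mult2_eq)

lemma w3_step: "d < 3 \<Longrightarrow> w3 (Suc m) (3*k + d) = w3 m k + d" by (simp add: w3_Suc)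

lemma w3_0 [simp]: "w3 m 0 = 0" by (simp add: w3_def)

lemma w3_top: "w3 m (3^m - 1) = 2 * m"
proof (induction m)
  case 0 then show ?case by (simp add: w3_def)
next
  case (Suc m)
  have p: "(3::nat)^m \<ge> 1" by simp
  have e: "(3::nat)^Suc m - 1 = 2 + 3 * (3^m - 1)"
  proof -
    define x where "x = (3::nat)^m"
    have "x \<ge> 1" using p x_def by simp
    then have "3*x - 1 = 2 + 3*(x-1)" by arith
    then show ?thesis by (simp add: x_def)
  qed
  show ?case unfolding e using Suc w3_step[of 2 m "3^m - 1"] by (simp add: add.commute)
qed

lemma sum3: "(\<Sum>j<3*N. f j) = (\<Sum>k<N. f (3*k) + f (3*k+1) + f (3*k+2))"
  for f :: "nat \<Rightarrow> 'b::comm_monoid_add"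
proof (induction N)
  case (Suc N)
  have e: "3 * Suc N = Suc (Suc (Suc (3*N)))" by simp
  show ?case unfolding e using Suc by (simp add: ac_simps)
qed simp

lemma wsum: "(\<Sum>j<3^Suc m. F (w3 (Suc m) j)) =
   (\<Sum>k<3^m. F (w3 m k) + F (w3 m k + 1) + F (w3 m k + 2))"
  for F :: "nat \<Rightarrow> 'b::comm_monoid_add"
proof -
  have a: "w3 (Suc m) (3*k) = w3 m k" "w3 (Suc m) (3*k+1) = w3 m k + 1"
     "w3 (Suc m) (3*k+2) = w3 m k + 2" for k
    using w3_step[of 0 m k] w3_step[of 1 m k] w3_step[of 2 m k] by simp_all
  show ?thesis unfolding power_Suc sum3 a ..
qed

lemma fin4: "s < (4::nat) \<Longrightarrow> s = 0 \<or> s = 1 \<or> s = 2 \<or> s = 3" by auto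
lemma md4': "r < 4 \<Longrightarrow> k < 4 \<Longrightarrow> s < 4 \<Longrightarrow> ((s+k) mod 4 = r) = (s = (r+4-k) mod (4::nat))"
  apply (drule fin4)+ apply (elim disjE) apply simp_all done
lemma md4: assumes "r < 4" "k < 4" shows "((w+k) mod 4 = r) = (w mod 4 = (r+4-k) mod (4::nat))"
proof -
  have e: "(w+k) mod 4 = (w mod 4 + k) mod 4" by (simp add: mod_add_left_eq)
  show ?thesis unfolding e using assms md4'[of r k "w mod 4"] by auto
qed

definition A :: "nat \<Rightarrow> nat \<Rightarrow> int" where
  "A m r = (\<Sum>j<3^m. if w3 m j mod 4 = r then 1 else 0)"

lemma A_Suc: "r < 4 \<Longrightarrow> A (Suc m) r = A m r + A m ((r+3) mod 4) + A m ((r+2) mod 4)"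
proof -
  assume r: "r < 4"
  have 1: "((w+1) mod 4 = r) = (w mod 4 = (r+3) mod 4)" for w::nat using r md4[of r 1 w] by (simp add: add.commute)
  have 2: "((w+2) mod 4 = r) = (w mod 4 = (r+2) mod 4)" for w::nat using r md4[of r 2 w] by simp
  have 3: "(if w mod 4 = r then 1 else 0) + (if (w+1) mod 4 = r then 1 else 0) + (if (w+2) mod 4 = r then 1 else 0)
     = (if w mod 4 = r then 1 else 0) + (if w mod 4 = (r+3) mod 4 then 1 else 0) + (if w mod 4 = (r+2) mod 4 then (1::int) else 0)" for w::nat
    by (simp only: 1 2)
  have W: "(\<Sum>j<3^Suc m. if w3 (Suc m) j mod 4 = r then 1 else (0::int)) =
    (\<Sum>k<3^m. (if w3 m k mod 4 = r then 1 else 0) + (if (w3 m k + 1) mod 4 = r then 1 else 0) + (if (w3 m k + 2) mod 4 = r then 1 else 0))"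
    by (rule wsum[of "\<lambda>w. if w mod 4 = r then 1 else (0::int)"])
  show ?thesis unfolding A_def W 3 sum.distrib ..
qed

lemma A_Suc': "A (Suc m) 0 = A m 0 + A m 3 + A m 2"
  "A (Suc m) 1 = A m 1 + A m 0 + A m 3"
  "A (Suc m) 2 = A m 2 + A m 1 + A m 0"
  "A (Suc m) 3 = A m 3 + A m 2 + A m 1"
  proof -
  have e: "(0+3) mod 4 = (3::nat)" "(0+2) mod 4 = (2::nat)" "(1+3) mod 4 = (0::nat)" "(1+2) mod 4 = (3::nat)"
    "(2+3) mod 4 = (1::nat)" "(2+2) mod 4 = (0::nat)" "(3+3) mod 4 = (2::nat)" "(3+2) mod 4 = (1::nat)"
    "(0::nat) < 4" "(1::nat) < 4" "(2::nat) < 4" "(3::nat) < 4" by simp_all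
  show "A (Suc m) 0 = A m 0 + A m 3 + A m 2" using A_Suc[of 0 m] by (simp only: e)
  show "A (Suc m) 1 = A m 1 + A m 0 + A m 3" using A_Suc[of 1 m] by (simp only: e)
  show "A (Suc m) 2 = A m 2 + A m 1 + A m 0" using A_Suc[of 2 m] by (simp only: e)
  show "A (Suc m) 3 = A m 3 + A m 2 + A m 1" using A_Suc[of 3 m] by (simp only: e)
qed

lemma A_0: "A 0 r = (if r = 0 then 1 else 0)"
  by (simp add: A_def w3_def)

lemma A_diff: "A m 0 - A m 2 = (if m mod 4 = 0 then 1 else if m mod 4 = 2 then -1 else 0) \<and>
   A m 1 - A m 3 = (if m mod 4 = 1 then 1 else if m mod 4 = 3 then -1 else 0)"
proof (induction m)
  case 0 then show ?case by (simp add: A_0)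
next
  case (Suc m)
  have "m mod 4 = 0 \<or> m mod 4 = 1 \<or> m mod 4 = 2 \<or> m mod 4 = 3" by (rule fin4) simp
  moreover have "Suc m mod 4 = (if m mod 4 = 3 then 0 else Suc (m mod 4))" by (simp add: mod_Suc)
  ultimately show ?case unfolding A_Suc' using Suc by auto
qed

lemma A_total: "A m 0 + A m 1 + A m 2 + A m 3 = 3^m"
proof (induction m)
  case 0 then show ?case by (simp add: A_0)
next
  case (Suc m) then show ?case unfolding A_Suc' by simp
qed

lemma sum_ind_card: "(\<Sum>x\<in>S. if P x then 1 else 0 :: int) = int (card {x\<in>S. P x})"
  if "finite S" using that by (simp add: sum.If_cases Int_def)

lemma card_T:
  assumes m: "m \<ge> 1" and i: "i1 < 4" "i2 < 4" "i1 \<noteq> i2"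
  shows "int (card (T_set i1 i2 m)) + (if i1 = 0 \<or> i2 = 0 then 1 else 0)
     + (if (2*m) mod 4 = i1 \<or> (2*m) mod 4 = i2 then 1 else 0) = A m i1 + A m i2"
proof -
  define P where "P j = (w3 m j mod 4 = i1 \<or> w3 m j mod 4 = i2)" for j
  have ind: "(if P j then 1 else 0 :: int) = (if w3 m j mod 4 = i1 then 1 else 0) + (if w3 m j mod 4 = i2 then 1 else 0)" for j
    using i unfolding P_def by auto
  have "A m i1 + A m i2 = (\<Sum>j<3^m. if P j then 1 else 0)"
    unfolding A_def ind sum.distrib by simp
  have N: "(3::nat)^m \<ge> 3" using power_increasing[of 1 m "3::nat"] m by simp
  define M where "M = (3::nat)^m"
  have NM: "M \<ge> 3" using N M_def by simp
  have split: "{..<M} = insert 0 (insert (M - 1) {1..M-2})" using NM by auto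
  have "(\<Sum>j<M. if P j then 1 else 0 :: int) = (if P 0 then 1 else 0) + (if P (M - 1) then 1 else 0)
      + (\<Sum>j\<in>{1..M-2}. if P j then 1 else 0)"
  proof -
    have a: "M - 1 \<notin> {1..M-2}" "0 \<notin> insert (M-1) {1..M-2}" using NM by auto
    show ?thesis unfolding split sum.insert[OF finite_insert[THEN iffD2, OF finite_atLeastAtMost] a(2)]
      sum.insert[OF finite_atLeastAtMost a(1)] by (simp add: add.assoc)
  qed
  then have "(\<Sum>j<3^m. if P j then 1 else 0 :: int) = (if P 0 then 1 else 0) + (if P (3^m - 1) then 1 else 0)
      + (\<Sum>j\<in>{1..3^m-2}. if P j then 1 else 0)" unfolding M_def .
  also have "(\<Sum>j\<in>{1..3^m-2}. if P j then 1 else 0 :: int) = int (card (T_set i1 i2 m))"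
  proof -
    have "{j\<in>{1..3^m-2}. P j} = T_set i1 i2 m" unfolding T_set_def P_def by auto
    then show ?thesis by (subst sum_ind_card) auto
  qed
  finally have "A m i1 + A m i2 = (if P 0 then 1 else 0) + (if P (3^m - 1) then 1 else 0) + int (card (T_set i1 i2 m))"
    using \<open>A m i1 + A m i2 = _\<close> by simp
  moreover have "P 0 = (i1 = 0 \<or> i2 = 0)" unfolding P_def by auto
  moreover have "P (3^m - 1) = ((2*m) mod 4 = i1 \<or> (2*m) mod 4 = i2)" unfolding P_def w3_top ..
  ultimately show ?thesis by simp
qed

lemma cards:
  assumes "m mod 4 = 1"
  shows "2 * card (T_set 0 3 m) + 3 = 3^m" "2 * card (T_set 1 2 m) + 1 = 3^m"
    "2 * card (T_set 2 3 m) + 3 = 3^m" "2 * card (T_set 0 1 m) + 1 = 3^m"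
proof -
  obtain q where q: "m = 4*q + 1" using assms div_mult_mod_eq[of m 4] by (metis mult.commute)
  have m: "m \<ge> 1" using q by simp
  have t1: "(2 + 4*k) mod 4 = (2::nat)" for k by (subst mod_mult_self2) simp
  have "2*m = 2 + 4*(2*q)" using q by simp
  then have m2: "(2*m) mod 4 = 2" using t1[of "2*q"] by (simp only:)
  have D1: "A m 0 = A m 2" "A m 1 - A m 3 = 1" using A_diff[of m] assms by auto
  have D2: "A m 0 + A m 1 + A m 2 + A m 3 = 3^m" by (rule A_total)
  have c1: "int (card (T_set 0 3 m)) + 1 = A m 0 + A m 3" using card_T[of m 0 3] m m2 by simp
  have c2: "int (card (T_set 1 2 m)) + 1 = A m 1 + A m 2" using card_T[of m 1 2] m m2 by simp
  have c3: "int (card (T_set 2 3 m)) + 1 = A m 2 + A m 3" using card_T[of m 2 3] m m2 by simp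
  have c4: "int (card (T_set 0 1 m)) + 1 = A m 0 + A m 1" using card_T[of m 0 1] m m2 by simp
  have "2 * int (card (T_set 0 3 m)) + 3 = 3^m" using c1 D1 D2 by linarith
  then have "int (2 * card (T_set 0 3 m) + 3) = int (3^m)" by simp
  then show "2 * card (T_set 0 3 m) + 3 = 3^m" by (simp only: of_nat_eq_iff)
  have "2 * int (card (T_set 1 2 m)) + 1 = 3^m" using c2 D1 D2 by linarith
  then have "int (2 * card (T_set 1 2 m) + 1) = int (3^m)" by simp
  then show "2 * card (T_set 1 2 m) + 1 = 3^m" by (simp only: of_nat_eq_iff)
  have "2 * int (card (T_set 2 3 m)) + 3 = 3^m" using c3 D1 D2 by linarith
  then have "int (2 * card (T_set 2 3 m) + 3) = int (3^m)" by simp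
  then show "2 * card (T_set 2 3 m) + 3 = 3^m" by (simp only: of_nat_eq_iff)
  have "2 * int (card (T_set 0 1 m)) + 1 = 3^m" using c4 D1 D2 by linarith
  then have "int (2 * card (T_set 0 1 m) + 1) = int (3^m)" by simp
  then show "2 * card (T_set 0 1 m) + 1 = 3^m" by (simp only: of_nat_eq_iff)
qed



lemma card_zero_field:
  "of_nat (card (UNIV :: 'a::{finite,field} set)) = (0::'a)"
proof -
  have "(\<Sum>x\<in>(UNIV::'a set). x + 1) = (\<Sum>x\<in>UNIV. x)"
    by (rule sum.reindex_bij_witness[of _ "\<lambda>y. y - 1" "\<lambda>x. x + 1"]) auto
  then show ?thesis by (simp add: sum.distrib)
qed

lemma char3:
  assumes "card (UNIV :: 'a::{finite,field} set) = 3 ^ m"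
  shows "(3::'a) = 0"
proof -
  have "(of_nat (3^m) :: 'a) = 0" using card_zero_field[where 'a='a] assms by simp
  then have "(3::'a)^m = 0" by simp
  then show ?thesis by simp
qed

lemma fermat_field:
  fixes x :: "'a::{finite,field}"
  assumes "x \<noteq> 0"
  shows "x ^ (card (UNIV :: 'a set) - 1) = 1"
proof -
  define U where "U = (UNIV :: 'a set) - {0}"
  have "(\<Prod>y\<in>U. x * y) = (\<Prod>y\<in>U. y)"
    by (rule prod.reindex_bij_witness[of _ "\<lambda>y. y / x" "\<lambda>y. x * y"]) (use assms in \<open>auto simp: U_def\<close>)
  then have "x ^ card U * (\<Prod>y\<in>U. y) = (\<Prod>y\<in>U. y)" by (simp add: prod.distrib)
  moreover have "(\<Prod>y\<in>U. y) \<noteq> 0" by (simp add: U_def)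
  ultimately have "x ^ card U = 1" by simp
  moreover have "card U = card (UNIV :: 'a set) - 1" unfolding U_def by (simp add: card_Diff_singleton)
  ultimately show ?thesis by simp
qed

lemma frob_add:
  fixes x y :: "'a::field"
  assumes "(3::'a) = 0"
  shows "(x + y)^3 = x^3 + y^3"
proof -
  have "(x + y)^3 = x^3 + y^3 + 3 * (x*x*y + x*y*y)" by (simp add: power3_eq_cube algebra_simps)
  then show ?thesis using assms by simp
qed

lemma cube_eq_self:
  fixes c :: "'a::field"
  assumes "c^3 = c"
  shows "c = 0 \<or> c = 1 \<or> c = -1"
proof -
  have "c * (c - 1) * (c + 1) = 0" using assms by (simp add: power3_eq_cube algebra_simps)
  then show ?thesis by (auto simp: eq_neg_iff_add_eq_0)
qed

lemma hom_props:
  assumes "ring_hom_fun \<phi>"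
  shows "\<phi> 0 = 0" "\<phi> 1 = 1" "\<phi> (x + y) = \<phi> x + \<phi> y" "\<phi> (x * y) = \<phi> x * \<phi> y"
    "\<phi> (-1) = -1" "inj \<phi>"
proof -
  show h1: "\<phi> 1 = 1" and ha: "\<phi> (x + y) = \<phi> x + \<phi> y" and hm: "\<phi> (x * y) = \<phi> x * \<phi> y"
    for x y using assms unfolding ring_hom_fun_def by auto
  have "\<phi> 0 = \<phi> 0 + \<phi> 0" using ha[of 0 0] by simp
  then show h0: "\<phi> 0 = 0" using add_cancel_right_right by blast
  have "\<phi> (-1) + \<phi> 1 = 0" using ha[of "-1" 1] h0 by simp
  then show "\<phi> (-1) = -1" using h1 by (simp add: eq_neg_iff_add_eq_0)
  have nz: "\<phi> z \<noteq> 0" if "z \<noteq> 0" for z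
  proof
    assume "\<phi> z = 0"
    then have "\<phi> (z * inverse z) = 0" using hm by simp
    then show False using that h1 by simp
  qed
  have neg: "\<phi> (- z) = - \<phi> z" for z
    using ha[of z "-z"] h0 by (simp add: eq_neg_iff_add_eq_0 add.commute)
  show "inj \<phi>"
  proof (rule injI)
    fix x y assume "\<phi> x = \<phi> y"
    then have "\<phi> (x + - y) = 0" unfolding ha neg by simp
    then show "x = y" using nz[of "x + - y"] by (auto simp del: ab_group_add_class.ab_diff_conv_add_uminus)
  qed
qed



lemma digit_mod:
  assumes "t < M"
  shows "(j mod 3^M) div 3^t mod 3 = j div 3^t mod (3::nat)"
proof -
  have e: "(3::nat)^M = 3^t * 3^(M-t)" using assms by (simp add: power_add[symmetric])
  have "(j mod 3^M) div 3^t = j div 3^t mod 3^(M-t)"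
    unfolding e mod_mult2_eq by simp
  moreover have "(3::nat) dvd 3^(M-t)" using assms by simp
  ultimately show ?thesis by (simp add: mod_mod_cancel)
qed

lemma w3_split: "w3 (Suc M) j = w3 M (j mod 3^M) + j div 3^M mod 3"
  unfolding w3_def sum.lessThan_Suc
  by (simp add: digit_mod)

definition sig :: "nat \<Rightarrow> nat \<Rightarrow> nat" where
  "sig M j = j div 3^M + 3 * (j mod 3^M)"

lemma sig_mult: "3 * j = (3^(Suc M) - 1) * (j div 3^M) + sig M j"
proof -
  define q where "q = j div 3^M"
  define r where "r = j mod 3^M"
  have j: "j = 3^M * q + r" unfolding q_def r_def by simp
  have "3 * j = 3^Suc M * q + 3 * r" using j by simp
  moreover obtain Y where Y: "(3::nat)^Suc M = Suc Y" using not0_implies_Suc[of "(3::nat)^Suc M"] by auto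
  ultimately show ?thesis unfolding sig_def q_def[symmetric] r_def[symmetric] Y by simp
qed

lemma sig_T:
  assumes "j \<in> T_set i1 i2 (Suc M)"
  shows "sig M j \<in> T_set i1 i2 (Suc M)"
proof -
  define B where "B = (3::nat)^M"
  define q where "q = j div B"
  define r where "r = j mod B"
  have B1: "B \<ge> 1" unfolding B_def by simp
  have j: "j = B * q + r" unfolding q_def r_def by simp
  have r: "r < B" unfolding r_def using B1 by simp
  have jb: "1 \<le> j" "j \<le> 3 * B - 2" using assms unfolding T_set_def B_def by auto
  have q3: "q < 3"
  proof -
    have "j < 3 * B" using jb B1 by linarith
    then show ?thesis unfolding q_def by (simp add: div_less_iff_less_mult mult.commute B1)
  qed
  have s: "sig M j = q + 3 * r" unfolding sig_def q_def r_def B_def ..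
  have s1: "1 \<le> q + 3 * r"
  proof (rule ccontr)
    assume "\<not> 1 \<le> q + 3 * r" then have "q = 0" "r = 0" by auto
    then show False using j jb by simp
  qed
  have s2: "q + 3 * r \<le> 3 * B - 2"
  proof (rule ccontr)
    assume a: "\<not> q + 3 * r \<le> 3 * B - 2"
    have "q = 0 \<or> q = 1 \<or> q = 2" using q3 by auto
    then show False
    proof (elim disjE)
      assume "q = 0" then show False using a r by linarith
    next
      assume "q = 1" then show False using a r by linarith
    next
      assume q2: "q = 2"
      then have "r = B - 1" using a r by linarith
      then have "j = 3 * B - 1" using j q2 B1 by simp
      then show False using jb B1 by linarith
    qed
  qed
  have w: "w3 (Suc M) (sig M j) = w3 (Suc M) j"
  proof -
    have "w3 (Suc M) (sig M j) = w3 M r + q"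
      unfolding s using w3_step[OF q3, of M r] by (simp add: add.commute)
    moreover have "w3 (Suc M) j = w3 M r + q"
      unfolding w3_split B_def[symmetric] r_def[symmetric] q_def[symmetric] using q3 by simp
    ultimately show ?thesis by simp
  qed
  show ?thesis using assms s1 s2 w unfolding T_set_def s B_def by auto
qed

lemma sig_inj: "inj_on (sig M) {..<3^Suc M}"
proof (rule inj_onI)
  fix x y assume x: "x \<in> {..<3^Suc M}" and y: "y \<in> {..<3^Suc M}" and e: "sig M x = sig M y"
  have qx: "x div 3^M < 3" using x by (simp add: div_less_iff_less_mult mult.commute)
  have qy: "y div 3^M < 3" using y by (simp add: div_less_iff_less_mult mult.commute)
  have "sig M x mod 3 = x div 3^M" "sig M x div 3 = x mod 3^M"
    unfolding sig_def using qx by simp_all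
  moreover have "sig M y mod 3 = y div 3^M" "sig M y div 3 = y mod 3^M"
    unfolding sig_def using qy by simp_all
  ultimately have "x div 3^M = y div 3^M" "x mod 3^M = y mod 3^M" using e by metis+
  then show "x = y" by (metis div_mult_mod_eq)
qed



lemma roots_prod_dvd:
  fixes p :: "'a::field poly"
  assumes "finite S" "\<forall>a\<in>S. poly p a = 0"
  shows "(\<Prod>a\<in>S. [:-a, 1:]) dvd p"
  using assms
proof (induction S rule: finite_induct)
  case empty then show ?case by simp
next
  case (insert a S)
  then have "(\<Prod>a\<in>S. [:-a, 1:]) dvd p" by simp
  then obtain q where q: "p = (\<Prod>a\<in>S. [:-a, 1:]) * q" by (auto elim: dvdE)
  have "poly (\<Prod>a\<in>S. [:-a, 1:]) a \<noteq> 0"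
    using insert(1,2) by (auto simp: poly_prod)
  moreover have "poly p a = 0" using insert by simp
  ultimately have "poly q a = 0" unfolding q by simp
  then have "[:-a, 1:] dvd q" by (simp add: poly_eq_0_iff_dvd)
  then have "[:-a, 1:] * (\<Prod>a\<in>S. [:-a, 1:]) dvd (\<Prod>a\<in>S. [:-a, 1:]) * q"
    using mult_dvd_mono[OF \<open>[:-a, 1:] dvd q\<close> dvd_refl, of "\<Prod>a\<in>S. [:-a, 1:]"] by (simp add: mult.commute)
  then show ?case using insert(1,2) q by simp
qed

lemma gen_poly_main:
  fixes \<alpha> :: "'a::{finite,field}" and \<phi> :: "'f::field \<Rightarrow> 'a"
  assumes cardA: "card (UNIV::'a set) = 3^Suc M" and hom: "ring_hom_fun \<phi>"
    and prim: "primitive_elem \<alpha>"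
  shows "gen_poly \<phi> \<alpha> i1 i2 (Suc M) \<noteq> 0 \<and>
    degree (gen_poly \<phi> \<alpha> i1 i2 (Suc M)) = card (T_set i1 i2 (Suc M)) \<and>
    gen_poly \<phi> \<alpha> i1 i2 (Suc M) dvd (monom 1 (3^Suc M - 1) - 1)"
proof -
  define m where "m = Suc M"
  define n where "n = (3::nat)^m - 1"
  define T where "T = T_set i1 i2 m"
  define P where "P = gen_poly_ext \<alpha> i1 i2 m"
  have P_def': "P = (\<Prod>j\<in>T. [:-(\<alpha>^j), 1:])" unfolding P_def T_def gen_poly_ext_def ..
  have three: "(3::'a) = 0" using char3 cardA by blast
  have a0: "\<alpha> \<noteq> 0" using prim unfolding primitive_elem_def by simp
  have "(3::nat)^M \<ge> 1" by simp
  then have npos: "n > 0" unfolding n_def m_def by (simp only: power_Suc)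
  have an: "\<alpha>^n = 1" using fermat_field[OF a0] cardA unfolding n_def m_def by simp
  have Tsub: "T \<subseteq> {..<n}" unfolding T_def T_set_def n_def by auto
  have finT: "finite T" using Tsub finite_subset by blast
  have Tsub2: "T \<subseteq> {..<3^Suc M}" using Tsub unfolding n_def m_def by auto
  have img: "(\<lambda>k. \<alpha>^k) ` {..<n} = UNIV - {0}"
  proof
    show "(\<lambda>k. \<alpha>^k) ` {..<n} \<subseteq> UNIV - {0}" using a0 by auto
    show "UNIV - {0} \<subseteq> (\<lambda>k. \<alpha>^k) ` {..<n}"
    proof
      fix x :: 'a assume "x \<in> UNIV - {0}"
      then obtain k where k: "x = \<alpha>^k" using prim unfolding primitive_elem_def by auto
      have e: "\<alpha>^(n * (k div n) + k mod n) = \<alpha>^(k mod n)"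
        by (simp only: power_add power_mult an power_one mult_1_left)
      have "k = n * (k div n) + k mod n" by simp
      then have "\<alpha>^k = \<alpha>^(k mod n)" using e by metis
      then show "x \<in> (\<lambda>k. \<alpha>^k) ` {..<n}" using k npos by auto
    qed
  qed
  have "card ((\<lambda>k. \<alpha>^k) ` {..<n}) = card {..<n}"
    unfolding img using cardA by (simp add: card_Diff_singleton n_def m_def)
  then have injA: "inj_on (\<lambda>k. \<alpha>^k) {..<n}" by (rule eq_card_imp_inj_on[rotated]) simp
  \<comment> \<open>Frobenius invariance\<close>
  define F where "F = (\<lambda>x::'a. x^3)"
  have F0: "F 0 = 0" and F1: "F 1 = 1" unfolding F_def by simp_all
  have Fa: "F (x + y) = F x + F y" for x y unfolding F_def using frob_add[OF three] .
  have Fm: "F (x * y) = F x * F y" for x y unfolding F_def by (simp add: power_mult_distrib)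
  have sigT: "sig M ` T = T"
  proof (rule endo_inj_surj[OF finT])
    show "sig M ` T \<subseteq> T" using sig_T unfolding T_def m_def by blast
    show "inj_on (sig M) T" using sig_inj Tsub2 inj_on_subset by blast
  qed
  have sig_inj_T: "inj_on (sig M) T" using sig_inj Tsub2 inj_on_subset by blast
  have asig: "\<alpha>^(3*j) = \<alpha>^(sig M j)" for j
  proof -
    have "\<alpha>^(3*j) = \<alpha>^(n * (j div 3^M) + sig M j)"
      using sig_mult[of j M] unfolding n_def m_def by simp
    also have "\<dots> = \<alpha>^(sig M j)" by (simp add: power_add power_mult an)
    finally show ?thesis .
  qed
  have mapF: "map_poly F P = P"
  proof -
    have "map_poly F P = (\<Prod>j\<in>T. map_poly F [:-(\<alpha>^j), 1:])"
      unfolding P_def' by (rule map_poly_prod_hom[OF F0 F1 Fa Fm])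
    also have "\<dots> = (\<Prod>j\<in>T. [:-(\<alpha>^(sig M j)), 1:])"
    proof (rule prod.cong[OF refl])
      fix j
      have "F (-(\<alpha>^j)) = -(\<alpha>^(3*j))" unfolding F_def by (simp add: power_mult[symmetric] mult.commute)
      then show "map_poly F [:-(\<alpha>^j), 1:] = [:-(\<alpha>^(sig M j)), 1:]"
        using F0 F1 asig[of j] by (simp add: map_poly_pCons)
    qed
    also have "\<dots> = (\<Prod>j\<in>sig M ` T. [:-(\<alpha>^j), 1:])"
      by (rule prod.reindex[OF sig_inj_T, unfolded comp_def, symmetric])
    also have "\<dots> = P" unfolding sigT P_def' ..
    finally show ?thesis .
  qed
  have coef: "coeff P k = 0 \<or> coeff P k = 1 \<or> coeff P k = -1" for k
  proof -
    have "F (coeff P k) = coeff P k" using mapF coeff_map_poly[of F P k, OF F0] by simp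
    then show ?thesis using cube_eq_self unfolding F_def by blast
  qed
  note hp = hom_props[OF hom]
  define \<psi> where "\<psi> = (\<lambda>c::'a. if c = 1 then (1::'f) else if c = -1 then -1 else 0)"
  have psi0: "\<psi> 0 = 0" unfolding \<psi>_def by simp
  define g0 where "g0 = map_poly \<psi> P"
  have mg0: "map_poly \<phi> g0 = P"
  proof (rule poly_eqI)
    fix k
    have "coeff (map_poly \<phi> g0) k = \<phi> (\<psi> (coeff P k))"
      unfolding g0_def by (simp add: coeff_map_poly hp(1) psi0)
    also have "\<dots> = coeff P k" using coef[of k] hp(1,2,5) unfolding \<psi>_def by auto
    finally show "coeff (map_poly \<phi> g0) k = coeff P k" .
  qed
  have g_eq: "gen_poly \<phi> \<alpha> i1 i2 m = g0"
    unfolding gen_poly_def P_def[symmetric]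
  proof (rule the_equality[where P="\<lambda>g. map_poly \<phi> g = P", OF mg0])
    fix g assume "map_poly \<phi> g = P"
    then have "map_poly \<phi> g = map_poly \<phi> g0" using mg0 by simp
    show "g = g0"
    proof (rule poly_eqI)
      fix k
      have "\<phi> (coeff g k) = \<phi> (coeff g0 k)"
        using arg_cong[OF \<open>map_poly \<phi> g = map_poly \<phi> g0\<close>, of "\<lambda>p. coeff p k"]
        by (simp add: coeff_map_poly hp(1))
      then show "coeff g k = coeff g0 k" using hp(6) by (simp add: inj_eq)
    qed
  qed
  have phi_nz: "\<phi> x \<noteq> 0" if "x \<noteq> 0" for x
    using hp(1) hp(6) that by (metis injD)
  have degP: "degree P = card T"
    unfolding P_def' by (subst degree_prod_sum_eq) auto
  have P0: "P \<noteq> 0" unfolding P_def' using finT by simp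
  have degg: "degree g0 = card T"
    using degree_map_poly[of \<phi> g0, OF phi_nz] mg0 degP by simp
  have g00: "g0 \<noteq> 0" using mg0 P0 by auto
  define Xa :: "'a poly" where "Xa = monom 1 n - 1"
  define Xf :: "'f poly" where "Xf = monom 1 n - 1"
  have PX: "P dvd Xa"
  proof -
    have "P = (\<Prod>a\<in>(\<lambda>j. \<alpha>^j) ` T. [:-a, 1:])"
      unfolding P_def' using prod.reindex[OF inj_on_subset[OF injA Tsub], of "\<lambda>a. [:-a, 1:]"] by simp
    also have "\<dots> dvd Xa"
    proof (rule roots_prod_dvd)
      show "finite ((\<lambda>j. \<alpha>^j) ` T)" using finT by simp
      show "\<forall>a\<in>(\<lambda>j. \<alpha>^j) ` T. poly Xa a = 0"
      proof
        fix a assume "a \<in> (\<lambda>j. \<alpha>^j) ` T"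
        then obtain j where j: "a = \<alpha>^j" by auto
        have "(\<alpha>^j)^n = 1" by (metis an power_mult mult.commute power_one)
        then show "poly Xa a = 0" unfolding Xa_def j by (simp add: poly_monom)
      qed
    qed
    finally show ?thesis .
  qed
  have hdiff: "\<phi> (x - y) = \<phi> x - \<phi> y" for x y
    using hp(3)[of "x - y" y] by (simp add: algebra_simps)
  have mX: "map_poly \<phi> Xf = Xa"
    unfolding Xf_def Xa_def by (rule poly_eqI) (simp add: coeff_map_poly hp(1,2) hdiff coeff_monom)
  define r where "r = Xf mod g0"
  have "Xf = Xf div g0 * g0 + r" unfolding r_def by simp
  then have "Xa = map_poly \<phi> (Xf div g0) * P + map_poly \<phi> r"
    using mX mg0 map_poly_add_hom[of \<phi>, OF hp(1) hp(3)] map_poly_mult_hom[of \<phi>, OF hp(1) hp(3) hp(4)]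
    by metis
  then have Pr: "P dvd map_poly \<phi> r" using PX by (metis dvd_add_right_iff dvd_triv_right)
  have r0: "r = 0"
  proof (rule ccontr)
    assume "r \<noteq> 0"
    then have "degree r < degree g0" unfolding r_def using degree_mod_less'[OF g00] by simp
    moreover have "map_poly \<phi> r \<noteq> 0" using \<open>r \<noteq> 0\<close> map_poly_eq_0_iff[of \<phi> r] hp(1) phi_nz by auto
    then have "degree P \<le> degree (map_poly \<phi> r)" using dvd_imp_degree_le Pr by blast
    ultimately show False using degree_map_poly[of \<phi> r, OF phi_nz] degP degg by simp
  qed
  then have "g0 dvd Xf" unfolding r_def by auto
  then show ?thesis using g_eq g00 degg unfolding m_def[symmetric] T_def[symmetric] Xf_def n_def by simp
qed


lemma code_facts:
  fixes \<alpha> :: "'a::{finite,field}" and \<phi> :: "'f::field \<Rightarrow> 'a"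
  assumes cardA: "card (UNIV::'a set) = 3^Suc M" and hom: "ring_hom_fun \<phi>"
    and prim: "primitive_elem \<alpha>"
  shows "(\<forall>c\<in>cyclic_code (3^Suc M - 1) (gen_poly \<phi> \<alpha> i1 i2 (Suc M)). degree c < 3^Suc M - 1) \<and>
    code_dim (cyclic_code (3^Suc M - 1) (gen_poly \<phi> \<alpha> i1 i2 (Suc M))) = 3^Suc M - 1 - card (T_set i1 i2 (Suc M))"
proof -
  have "(3::nat)^M \<ge> 1" by simp
  then have npos: "3^Suc M - 1 > (0::nat)" by (simp only: power_Suc)
  note G = gen_poly_main[OF cardA hom prim, of i1 i2]
  show ?thesis using code_dim_lemma[OF npos, of "gen_poly \<phi> \<alpha> i1 i2 (Suc M)"] G by simp
qed

theorem theorem2: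
  fixes m :: nat and \<alpha> :: "'a::{finite,field}" and \<phi> :: "'f::{finite,field} \<Rightarrow> 'a"
  assumes "m mod 4 = 1" and "m \<ge> 5"
    and "card (UNIV :: 'f set) = 3" and "card (UNIV :: 'a set) = 3 ^ m"
    and "ring_hom_fun \<phi>"
    and "primitive_elem \<alpha>"
  shows "let n = 3 ^ m - 1;
             C03 = cyclic_code n (gen_poly \<phi> \<alpha> 0 3 m);
             C12 = cyclic_code n (gen_poly \<phi> \<alpha> 1 2 m);
             C23 = cyclic_code n (gen_poly \<phi> \<alpha> 2 3 m);
             C01 = cyclic_code n (gen_poly \<phi> \<alpha> 0 1 m)
         in ((\<forall>c\<in>C03. degree c < n) \<and> code_dim C03 = (n + 2) div 2 \<and>
             (\<forall>c\<in>C12. degree c < n) \<and> code_dim C12 = n div 2) \<and>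
            ((\<forall>c\<in>C23. degree c < n) \<and> code_dim C23 = (n + 2) div 2 \<and>
             (\<forall>c\<in>C01. degree c < n) \<and> code_dim C01 = n div 2)"
proof -
  obtain M where M: "m = Suc M" using assms(2) by (cases m) auto
  have cA: "card (UNIV :: 'a set) = 3 ^ Suc M" using assms(4) M by simp
  note K = cards[OF assms(1)]
  note F03 = code_facts[OF cA assms(5) assms(6), of 0 3]
  note F12 = code_facts[OF cA assms(5) assms(6), of 1 2]
  note F23 = code_facts[OF cA assms(5) assms(6), of 2 3]
  note F01 = code_facts[OF cA assms(5) assms(6), of 0 1]
  define N where "N = (3::nat)^m"
  have a1: "N - 1 - card (T_set 0 3 m) = (N - 1 + 2) div 2" using K(1) unfolding N_def by linarith
  have a2: "N - 1 - card (T_set 1 2 m) = (N - 1) div 2" using K(2) unfolding N_def by linarith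
  have a3: "N - 1 - card (T_set 2 3 m) = (N - 1 + 2) div 2" using K(3) unfolding N_def by linarith
  have a4: "N - 1 - card (T_set 0 1 m) = (N - 1) div 2" using K(4) unfolding N_def by linarith
  show ?thesis
    unfolding Let_def using F03 F12 F23 F01 a1 a2 a3 a4 unfolding N_def M[symmetric] by simp
qed

end
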